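(* Let $P,Q$ be $n\times n$ stochastic matrices. For every $\delta>0$ and every $s\in\{0,1,\dots,n\}$, $$\Phi_{PQ}(s)\le\Phi_P\big(\delta\,\Phi_Q(s)\big)+\frac{n}{\delta}.$$
   Context: A matrix is stochastic if it is entrywise nonnegative with all row sums equal to $1$. For an $n\times n$ stochastic matrix $P$, the maximum one-time influence function is defined by $\Phi_P(0)=0$ and, for $s\in\{1,\dots,n\}$, $\Phi_P(s)=\max_{\mathcal{B}\subseteq\{1,\dots,n\},\,|\mathcal{B}|=s}\sum_{i=1}^n\sum_{j\in\mathcal{B}}P_{ij}$. It is extended to real arguments $x\ge0$ by $\Phi_P(x)=\Phi_P(\min(\lfloor x\rfloor,n))$. *)

theory Defs
  imports "HOL-Analysis.Analysis"
begin

text \<open>n x n matrices are real^'n^'n with n = CARD('n); row i, column j is P$i$j.\<close>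

definition stochastic :: "real^'n^'n \<Rightarrow> bool" where
  "stochastic P \<longleftrightarrow> (\<forall>i j. P$i$j \<ge> 0) \<and> (\<forall>i. (\<Sum>j\<in>UNIV. P$i$j) = 1)"

definition Phi_nat :: "real^'n^'n \<Rightarrow> nat \<Rightarrow> real" where
  "Phi_nat P s = (if s = 0 then 0 else
     Max {(\<Sum>i\<in>UNIV. \<Sum>j\<in>B. P$i$j) | B. B \<subseteq> (UNIV :: 'n set) \<and> card B = s})"

definition Phi :: "real^'n^'n \<Rightarrow> real \<Rightarrow> real" where
  "Phi P x = Phi_nat P (min (nat \<lfloor>x\<rfloor>) CARD('n))"

end

theory Submission
  imports Defs
begin

definition valB :: "real^'n^'n \<Rightarrow> 'n set \<Rightarrow> real" where
  "valB P B = (\<Sum>i\<in>UNIV. \<Sum>j\<in>B. P$i$j)"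

lemma Phi_nat_alt: "Phi_nat P s = (if s = 0 then 0 else Max (valB P ` {B. card B = s}))"
  unfolding Phi_nat_def valB_def by (auto intro!: arg_cong[where f=Max])

lemma finite_vals: "finite (valB P ` {B :: 'n::finite set. card B = s})"
  by simp

lemma val_le_Phi:
  assumes "card (B :: 'n::finite set) = s" "s \<ge> 1"
  shows "valB P B \<le> Phi_nat P s"
  using assms unfolding Phi_nat_alt by (auto intro!: Max_ge)

lemma Phi_attained:
  assumes "s \<ge> 1" "s \<le> CARD('n)"
  shows "\<exists>B :: 'n::finite set. card B = s \<and> Phi_nat P s = valB P B"
proof -
  obtain B :: "'n set" where "card B = s" using assms obtain_subset_with_card_n[of s "UNIV :: 'n set"] by auto
  hence ne: "valB P ` {B. card B = s} \<noteq> {}" by auto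
  have "Max (valB P ` {B. card B = s}) \<in> valB P ` {B. card B = s}"
    by (rule Max_in[OF finite_vals ne])
  thus ?thesis using assms unfolding Phi_nat_alt by auto
qed

lemma stoch_nonneg: "stochastic P \<Longrightarrow> P$i$j \<ge> 0"
  unfolding stochastic_def by auto

lemma valB_mono:
  assumes "stochastic P" "B \<subseteq> C"
  shows "valB P B \<le> valB P C"
  unfolding valB_def using assms stoch_nonneg[OF assms(1)]
  by (intro sum_mono sum_mono2) auto

lemma val_le_Phi_mono:
  assumes "stochastic P" "card (T :: 'n::finite set) \<le> t" "t \<le> CARD('n)"
  shows "valB P T \<le> Phi_nat P t"
proof (cases "t = 0")
  case True
  then have "T = {}" using assms by auto
  then show ?thesis using True by (simp add: valB_def Phi_nat_def)
next
  case False
  have "card T \<le> card (UNIV - T) + card T" by simp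
  have cu: "card (UNIV - T) = CARD('n) - card T" by (simp add: card_Diff_subset)
  obtain D where D: "D \<subseteq> UNIV - T" "card D = t - card T"
  proof -
    have "t - card T \<le> card (UNIV - T)" using cu assms by simp
    then show ?thesis using obtain_subset_with_card_n[of "t - card T" "UNIV - T"] that by blast
  qed
  have "card (T \<union> D) = t" using D assms
    by (subst card_Un_disjoint) auto
  then have "valB P (T \<union> D) \<le> Phi_nat P t" using False by (intro val_le_Phi) auto
  moreover have "valB P T \<le> valB P (T \<union> D)" by (rule valB_mono[OF assms(1)]) auto
  ultimately show ?thesis by linarith
qed

lemma Phi_nat_nonneg: "stochastic P \<Longrightarrow> t \<le> CARD('n) \<Longrightarrow> 0 \<le> Phi_nat (P::real^'n^'n) t"
  using val_le_Phi_mono[of P "{}" t] by (simp add: valB_def)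

theorem lemma5:
  fixes P Q :: "real^'n^'n" and \<delta> :: real and s :: nat
  assumes "stochastic P" and "stochastic Q" and "\<delta> > 0" and "s \<le> CARD('n)"
  shows "Phi_nat (P ** Q) s \<le> Phi P (\<delta> * Phi_nat Q s) + real CARD('n) / \<delta>"
proof (cases "s = 0")
  case True
  have "0 \<le> Phi P (\<delta> * Phi_nat Q s)" unfolding Phi_def
    by (rule Phi_nat_nonneg[OF assms(1)]) simp
  then show ?thesis using True assms(3) by (simp add: Phi_nat_def)
next
  case False
  obtain B where B: "card B = s" "Phi_nat (P ** Q) s = valB (P ** Q) B"
    using Phi_attained[of s "P ** Q"] False assms(4) by auto
  define c where "c k = (\<Sum>j\<in>B. Q$k$j)" for k
  define m where "m = Phi_nat Q s"
  have sumc: "(\<Sum>k\<in>UNIV. c k) \<le> m"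
  proof -
    have "(\<Sum>k\<in>UNIV. c k) = valB Q B" unfolding c_def valB_def by simp
    also have "\<dots> \<le> m" unfolding m_def using B False by (intro val_le_Phi) auto
    finally show ?thesis .
  qed
  have c0: "c k \<ge> 0" for k unfolding c_def using stoch_nonneg[OF assms(2)] by (auto intro: sum_nonneg)
  have c1: "c k \<le> 1" for k
  proof -
    have "c k \<le> (\<Sum>j\<in>UNIV. Q$k$j)" unfolding c_def using stoch_nonneg[OF assms(2)]
      by (intro sum_mono2) auto
    thus ?thesis using assms(2) unfolding stochastic_def by auto
  qed
  have val: "valB (P ** Q) B = (\<Sum>i\<in>UNIV. \<Sum>k\<in>UNIV. P$i$k * c k)"
    unfolding valB_def c_def matrix_matrix_mult_def
    by (simp add: sum_distrib_left sum.swap[of _ B])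
  define S where "S = {k. c k > 1 / \<delta>}"
  have "real (card S) / \<delta> \<le> (\<Sum>k\<in>S. c k)"
  proof -
    have "(\<Sum>k\<in>S. 1 / \<delta>) \<le> (\<Sum>k\<in>S. c k)" unfolding S_def by (intro sum_mono) auto
    thus ?thesis by simp
  qed
  also have "\<dots> \<le> (\<Sum>k\<in>UNIV. c k)" using c0 by (intro sum_mono2) auto
  finally have "real (card S) / \<delta> \<le> m" using sumc by linarith
  hence "real (card S) \<le> \<delta> * m" using assms(3) by (simp add: field_simps)
  hence "int (card S) \<le> \<lfloor>\<delta> * m\<rfloor>" by (simp add: le_floor_iff)
  hence cS: "card S \<le> min (nat \<lfloor>\<delta> * m\<rfloor>) CARD('n)" by (auto simp: card_mono)
  have PS: "valB P S \<le> Phi P (\<delta> * m)" unfolding Phi_def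
    by (rule val_le_Phi_mono[OF assms(1) cS]) simp
  have split: "(\<Sum>k\<in>UNIV. P$i$k * c k) \<le> (\<Sum>k\<in>S. P$i$k) + (\<Sum>k\<in>UNIV. P$i$k) / \<delta>" for i
  proof -
    have "(\<Sum>k\<in>UNIV. P$i$k * c k) = (\<Sum>k\<in>S. P$i$k * c k) + (\<Sum>k\<in>UNIV - S. P$i$k * c k)"
      by (simp add: sum.subset_diff[of S UNIV])
    also have "(\<Sum>k\<in>S. P$i$k * c k) \<le> (\<Sum>k\<in>S. P$i$k)"
      using c1 stoch_nonneg[OF assms(1)] by (intro sum_mono) (simp add: mult_left_le)
    also have "(\<Sum>k\<in>UNIV - S. P$i$k * c k) \<le> (\<Sum>k\<in>UNIV - S. P$i$k / \<delta>)"
      using stoch_nonneg[OF assms(1)] unfolding S_def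
      by (intro sum_mono) (auto simp: divide_inverse mult_left_mono)
    also have "\<dots> \<le> (\<Sum>k\<in>UNIV. P$i$k / \<delta>)"
      using stoch_nonneg[OF assms(1)] assms(3) by (intro sum_mono2) auto
    also have "\<dots> = (\<Sum>k\<in>UNIV. P$i$k) / \<delta>" by (simp add: sum_divide_distrib)
    finally show ?thesis by simp
  qed
  have "valB (P ** Q) B \<le> (\<Sum>i\<in>UNIV. (\<Sum>k\<in>S. P$i$k) + (\<Sum>k\<in>UNIV. P$i$k) / \<delta>)"
    unfolding val by (intro sum_mono split)
  also have "\<dots> = valB P S + real CARD('n) / \<delta>"
    using assms(1) unfolding stochastic_def valB_def
    by (simp add: sum.distrib sum_divide_distrib[symmetric])
  finally show ?thesis using B PS unfolding m_def by linarith
qed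

end
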